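(* Let $p\in\mathbb P^2(\mathbb R)$ and let $l$ be a real line through $p$; fix affine coordinates centered at $p$ in which $l=\{y=0\}$. Let $f\in F_{(p,l)}$ and $g\in I_{(p,l)}$. If $\operatorname{ord}_p(f)=2$ and $D_f''(0)\neq0$, then there exist a neighborhood $U\subseteq\mathbb P^2(\mathbb R)$ of $p$ and $\epsilon>0$ such that $f+\epsilon g$ is nonnegative on $U$.
   Context: $H_k\subseteq\mathbb R[x,y,z]$ is the space of real ternary forms of degree $k$; $P_{3,4}=\{f\in H_4: f\ge0 \text{ on }\mathbb P^2(\mathbb R)\}$. Local notation. For $p\in\mathbb P^2(\mathbb R)$, affine coordinates centered at $p$ are obtained by an invertible real linear change of coordinates sending $p$ to $(0:0:1)$ followed by setting $z=1$; $f\in H_4$ becomes $f(x,y)=\sum_{i+j\le4}a_{ij}x^iy^j=f_0+\dots+f_4$ ($f_k$ homogeneous of degree $k$), and $\operatorname{ord}_p(f)$ is the least $k$ with $f_k\ne0$. For $\operatorname{ord}_pf\ge2$ put $\tilde f(x,y)=f(x,xy)/x^2=f_2(1,y)+xf_3(1,y)+x^2f_4(1,y)$. The discriminant of $f$ at $p$ is $D_f(y)=(f_3^2-4f_2f_4)(1,y)\in\mathbb R[y]$ (the discriminant of $\tilde f$ viewed as a quadratic polynomial in $x$). With coordinates centered at $p$ and $l=\{y=0\}$: $F_{(p,l)}=\{f\in P_{3,4}: f(p)=0,\ \tilde f(0,0)=0\}$ and $I_{(p,l)}=\{f\in H_4: a_{00}=a_{10}=a_{01}=a_{20}=a_{11}=a_{30}=0\}$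 (equivalently $\operatorname{ord}_pf\ge2$ and $\operatorname{ord}_{(0,0)}\tilde f\ge2$). *)

theory Defs
  imports "HOL-Analysis.Analysis" "HOL-Computational_Algebra.Polynomial"
begin

text \<open>A real ternary quartic written in local coordinates (u1,u2,u3) = (x,y,z):
  the coefficient a i j is the coefficient of x^i y^j z^(4-i-j); in the
  affine chart z = 1 this is the local polynomial sum a_ij x^i y^j.\<close>

definition quartic :: "(nat \<Rightarrow> nat \<Rightarrow> real) \<Rightarrow> real^3 \<Rightarrow> real" where
  "quartic a u = (\<Sum>i\<le>4. \<Sum>j\<le>4 - i. a i j * (u$1)^i * (u$2)^j * (u$3)^(4 - i - j))"

definition local_ord :: "(nat \<Rightarrow> nat \<Rightarrow> real) \<Rightarrow> nat" where
  "local_ord a = (LEAST k. \<exists>i j. i + j = k \<and> i + j \<le> 4 \<and> a i j \<noteq> 0)"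

text \<open>f_k(1,y) as a univariate polynomial in y.\<close>
definition hom_part :: "(nat \<Rightarrow> nat \<Rightarrow> real) \<Rightarrow> nat \<Rightarrow> real poly" where
  "hom_part a k = (\<Sum>j\<le>k. monom (a (k - j) j) j)"

definition discr :: "(nat \<Rightarrow> nat \<Rightarrow> real) \<Rightarrow> real poly" where
  "discr a = (hom_part a 3)^2 - 4 * hom_part a 2 * hom_part a 4"

definition form_of :: "(real^3 \<Rightarrow> real^3) \<Rightarrow> (nat \<Rightarrow> nat \<Rightarrow> real) \<Rightarrow> real^3 \<Rightarrow> real" where
  "form_of T a v = quartic a (T v)"

text \<open>f in F_(p,l): nonnegative on P^2, f(p)=0, tilde f(0,0) = f_2(1,0) = a_20 = 0.\<close>
definition in_F :: "(real^3 \<Rightarrow> real^3) \<Rightarrow> (nat \<Rightarrow> nat \<Rightarrow> real) \<Rightarrow> bool" where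
  "in_F T a \<longleftrightarrow> (\<forall>v. form_of T a v \<ge> 0) \<and> a 0 0 = 0 \<and> a 2 0 = 0"

definition in_I :: "(nat \<Rightarrow> nat \<Rightarrow> real) \<Rightarrow> bool" where
  "in_I b \<longleftrightarrow> b 0 0 = 0 \<and> b 1 0 = 0 \<and> b 0 1 = 0 \<and> b 2 0 = 0 \<and> b 1 1 = 0 \<and> b 3 0 = 0"

end

theory Submission
  imports Defs
begin

definition E :: "(nat \<Rightarrow> nat \<Rightarrow> real) \<Rightarrow> real \<Rightarrow> real \<Rightarrow> real" where
  "E a x y = a 0 0 + a 1 0 * x + a 0 1 * y + a 2 0 * x^2 + a 1 1 * x * y + a 0 2 * y^2
    + a 3 0 * x^3 + a 2 1 * x^2 * y + a 1 2 * x * y^2 + a 0 3 * y^3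
    + a 4 0 * x^4 + a 3 1 * x^3 * y + a 2 2 * x^2 * y^2 + a 1 3 * x * y^3 + a 0 4 * y^4"

lemma quartic_expand:
  "quartic a u = a 0 0 * (u$3)^4 + a 1 0 * (u$1) * (u$3)^3 + a 0 1 * (u$2) * (u$3)^3
    + a 2 0 * (u$1)^2 * (u$3)^2 + a 1 1 * (u$1) * (u$2) * (u$3)^2 + a 0 2 * (u$2)^2 * (u$3)^2
    + a 3 0 * (u$1)^3 * (u$3) + a 2 1 * (u$1)^2 * (u$2) * (u$3) + a 1 2 * (u$1) * (u$2)^2 * (u$3)
    + a 0 3 * (u$2)^3 * (u$3)
    + a 4 0 * (u$1)^4 + a 3 1 * (u$1)^3 * (u$2) + a 2 2 * (u$1)^2 * (u$2)^2 + a 1 3 * (u$1) * (u$2)^3 + a 0 4 * (u$2)^4"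
  unfolding quartic_def by (simp add: numeral_eq_Suc atMost_Suc algebra_simps)

lemma quartic_aff: "quartic a (vector [x, y, 1]) = E a x y"
  unfolding quartic_expand E_def by simp

lemma quartic_homog:
  assumes "u$3 \<noteq> 0"
  shows "quartic a u = (u$3)^4 * E a (u$1 / u$3) (u$2 / u$3)"
  using assms unfolding quartic_expand E_def
  by (simp add: field_simps power_divide eval_nat_numeral)

lemma coeff_hom_part: "coeff (hom_part a k) n = (if n \<le> k then a (k - n) n else 0)"
  unfolding hom_part_def by (simp add: coeff_sum)

lemma discr_dd0:
  "poly (pderiv (pderiv (discr a))) 0 =
     2 * ((2 * a 3 0 * a 1 2 + (a 2 1)^2) - 4 * (a 2 0 * a 2 2 + a 1 1 * a 3 1 + a 0 2 * a 4 0))"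
  by (simp add: poly_0_coeff_0 coeff_pderiv discr_def coeff_diff coeff_mult power2_eq_square
      coeff_hom_part numeral_mult_conv_smult mult.assoc numeral_eq_Suc atMost_Suc algebra_simps)

lemma ord_low:
  assumes "local_ord a = 2"
  shows "a 1 0 = 0" "a 0 1 = 0"
proof -
  have h1: "\<exists>i j. i + j = 1 \<and> i + j \<le> 4 \<and> a i j \<noteq> 0" if "a 1 0 \<noteq> 0"
    using that by (intro exI[of _ 1] exI[of _ 0]) auto
  have h2: "\<exists>i j. i + j = 1 \<and> i + j \<le> 4 \<and> a i j \<noteq> 0" if "a 0 1 \<noteq> 0"
    using that by (intro exI[of _ 0] exI[of _ 1]) auto
  have "local_ord a \<le> 1" if "a 1 0 \<noteq> 0"
    unfolding local_ord_def by (rule Least_le) (rule h1[OF that])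
  moreover have "local_ord a \<le> 1" if "a 0 1 \<noteq> 0"
    unfolding local_ord_def by (rule Least_le) (rule h2[OF that])
  ultimately show "a 1 0 = 0" "a 0 1 = 0" using assms by auto
qed

lemma cont_nonneg:
  fixes \<phi> :: "real \<Rightarrow> real"
  assumes "isCont \<phi> 0" "\<And>x. x \<noteq> 0 \<Longrightarrow> \<phi> x \<ge> 0"
  shows "\<phi> 0 \<ge> 0"
proof (rule tendsto_lowerbound)
  show "(\<phi> \<longlongrightarrow> \<phi> 0) (at 0)" using assms(1) isCont_def by blast
  show "\<forall>\<^sub>F x in at 0. 0 \<le> \<phi> x" using assms(2) by (auto simp: eventually_at_filter)
  show "at (0::real) \<noteq> bot" by simp
qed

lemma lin_zero:
  fixes c d :: real
  assumes "\<And>x. x \<noteq> 0 \<Longrightarrow> x * (c + d * x) \<ge> 0"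
  shows "c = 0"
proof (rule ccontr)
  assume c: "c \<noteq> 0"
  define s where "s = 1 / (\<bar>d\<bar> + 1)"
  have s: "s > 0" unfolding s_def by simp
  have "d * s \<le> \<bar>d\<bar> * s" using s by (simp add: mult_right_mono)
  also have "\<bar>d\<bar> * s < 1" unfolding s_def by (simp add: field_simps)
  finally have ds: "1 - d * s > 0" by simp
  have "(- c * s) * (c + d * (- c * s)) = - (c^2 * (s * (1 - d * s)))"
    by (simp add: algebra_simps power2_eq_square)
  moreover have "c^2 * (s * (1 - d * s)) > 0" using c s ds by simp
  moreover have "- c * s \<noteq> 0" using c s by simp
  ultimately show False using assms[of "- c * s"] by linarith
qed

lemma qf_nonneg:
  fixes P Q B Y W :: real
  assumes "P > 0" "4 * P * Q \<ge> B^2"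
  shows "P * Y^2 + B * Y * W + Q * W^2 \<ge> 0"
proof -
  have "P * (P * Y^2 + B * Y * W + Q * W^2) = (P * Y + B * W / 2)^2 + (P * Q - B^2 / 4) * W^2"
    by (simp add: algebra_simps power2_eq_square)
  also have "\<dots> \<ge> 0" using assms by (intro add_nonneg_nonneg) auto
  finally show ?thesis using assms(1) by (simp add: zero_le_mult_iff)
qed

lemma tb:
  fixes c u r S \<delta> :: real
  assumes "\<bar>u\<bar> \<le> S" "\<bar>r\<bar> \<le> \<delta>"
  shows "- (\<bar>c\<bar> * \<delta> * S) \<le> c * (u * r)"
proof -
  have "\<bar>c * (u * r)\<bar> = \<bar>c\<bar> * (\<bar>u\<bar> * \<bar>r\<bar>)" by (simp add: abs_mult)
  also have "\<dots> \<le> \<bar>c\<bar> * (S * \<delta>)"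
    using assms by (intro mult_left_mono mult_mono) auto
  finally show ?thesis by (simp add: algebra_simps)
qed

lemma core:
  fixes a b :: "nat \<Rightarrow> nat \<Rightarrow> real" and x y \<delta> \<epsilon> c0 :: real
  assumes za: "a 0 0 = 0" "a 1 0 = 0" "a 0 1 = 0" "a 2 0 = 0" "a 1 1 = 0" "a 3 0 = 0"
    and zb: "b 0 0 = 0" "b 1 0 = 0" "b 0 1 = 0" "b 2 0 = 0" "b 1 1 = 0" "b 3 0 = 0"
    and qf: "\<And>Y W. a 0 2 * Y^2 + a 2 1 * Y * W + a 4 0 * W^2 \<ge> c0 * (Y^2 + W^2)"
    and x: "\<bar>x\<bar> \<le> \<delta>" and y: "\<bar>y\<bar> \<le> \<delta>" and d1: "\<delta> \<le> 1" and e0: "\<epsilon> \<ge> 0"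
    and dK: "\<delta> * (\<bar>a 1 2\<bar> + \<bar>a 0 3\<bar> + \<bar>a 3 1\<bar> + \<bar>a 2 2\<bar> + \<bar>a 1 3\<bar> + \<bar>a 0 4\<bar>) \<le> c0 / 2"
    and eK: "\<epsilon> * (\<bar>b 0 2\<bar> + \<bar>b 2 1\<bar> + \<bar>b 4 0\<bar> + \<bar>b 1 2\<bar> + \<bar>b 0 3\<bar> + \<bar>b 3 1\<bar> + \<bar>b 2 2\<bar> + \<bar>b 1 3\<bar> + \<bar>b 0 4\<bar>) \<le> c0 / 2"
  shows "E a x y + \<epsilon> * E b x y \<ge> 0"
proof -
  define S where "S = y^2 + x^4"
  have S0: "S \<ge> 0" unfolding S_def by simp
  have u1: "\<bar>y^2\<bar> \<le> S" unfolding S_def by simp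
  have u3: "\<bar>x^4\<bar> \<le> S" unfolding S_def by simp
  have "2 * \<bar>x^2 * y\<bar> \<le> y^2 + x^4"
  proof -
    have "0 \<le> (\<bar>y\<bar> - x^2)^2" by simp
    thus ?thesis by (simp add: abs_mult power2_eq_square algebra_simps eval_nat_numeral)
  qed
  hence u2: "\<bar>x^2 * y\<bar> \<le> S" unfolding S_def by simp
  have r1: "\<bar>x\<bar> \<le> 1" "\<bar>y\<bar> \<le> 1" using x y d1 by auto
  have rx2: "\<bar>x^2\<bar> \<le> \<delta>"
  proof -
    have "\<bar>x^2\<bar> = \<bar>x\<bar> * \<bar>x\<bar>" by (simp add: power2_eq_square abs_mult)
    also have "\<dots> \<le> 1 * \<delta>" using r1 x by (intro mult_mono) auto
    finally show ?thesis by simp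
  qed
  have rxy: "\<bar>x * y\<bar> \<le> \<delta>"
  proof -
    have "\<bar>x*y\<bar> = \<bar>x\<bar> * \<bar>y\<bar>" by (simp add: abs_mult)
    also have "\<dots> \<le> 1 * \<delta>" using r1 y by (intro mult_mono) auto
    finally show ?thesis by simp
  qed
  have ry2: "\<bar>y^2\<bar> \<le> \<delta>"
  proof -
    have "\<bar>y^2\<bar> = \<bar>y\<bar> * \<bar>y\<bar>" by (simp add: power2_eq_square abs_mult)
    also have "\<dots> \<le> 1 * \<delta>" using r1 y by (intro mult_mono) auto
    finally show ?thesis by simp
  qed
  have main: "a 0 2 * y^2 + a 2 1 * x^2 * y + a 4 0 * x^4 \<ge> c0 * S"
    using qf[of y "x^2"] unfolding S_def by (simp add: algebra_simps power2_eq_square eval_nat_numeral)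
  have Ea: "E a x y = (a 0 2 * y^2 + a 2 1 * x^2 * y + a 4 0 * x^4)
      + a 1 2 * (y^2 * x) + a 0 3 * (y^2 * y) + a 3 1 * ((x^2 * y) * x)
      + a 2 2 * (y^2 * x^2) + a 1 3 * (y^2 * (x * y)) + a 0 4 * (y^2 * y^2)"
    unfolding E_def using za by (simp add: algebra_simps eval_nat_numeral)
  have Eb: "E b x y = b 0 2 * (y^2 * 1) + b 2 1 * ((x^2 * y) * 1) + b 4 0 * (x^4 * 1)
      + b 1 2 * (y^2 * x) + b 0 3 * (y^2 * y) + b 3 1 * ((x^2 * y) * x)
      + b 2 2 * (y^2 * x^2) + b 1 3 * (y^2 * (x * y)) + b 0 4 * (y^2 * y^2)"
    unfolding E_def using zb by (simp add: algebra_simps eval_nat_numeral)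
  have Ra: "E a x y \<ge> c0 * S - \<delta> * (\<bar>a 1 2\<bar> + \<bar>a 0 3\<bar> + \<bar>a 3 1\<bar> + \<bar>a 2 2\<bar> + \<bar>a 1 3\<bar> + \<bar>a 0 4\<bar>) * S"
    using main tb[OF u1 x, of "a 1 2"] tb[OF u1 y, of "a 0 3"] tb[OF u2 x, of "a 3 1"]
      tb[OF u1 rx2, of "a 2 2"] tb[OF u1 rxy, of "a 1 3"] tb[OF u1 ry2, of "a 0 4"]
    unfolding Ea by (simp add: algebra_simps)
  have o1: "\<bar>1::real\<bar> \<le> 1" by simp
  have Rb: "E b x y \<ge> - ((\<bar>b 0 2\<bar> + \<bar>b 2 1\<bar> + \<bar>b 4 0\<bar> + \<bar>b 1 2\<bar> + \<bar>b 0 3\<bar> + \<bar>b 3 1\<bar> + \<bar>b 2 2\<bar> + \<bar>b 1 3\<bar> + \<bar>b 0 4\<bar>) * S)"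
    using tb[OF u1 o1, of "b 0 2"] tb[OF u2 o1, of "b 2 1"] tb[OF u3 o1, of "b 4 0"]
      tb[OF u1 r1(1), of "b 1 2"] tb[OF u1 r1(2), of "b 0 3"] tb[OF u2 r1(1), of "b 3 1"]
      tb[OF u1 order_trans[OF rx2 d1], of "b 2 2"] tb[OF u1 order_trans[OF rxy d1], of "b 1 3"]
      tb[OF u1 order_trans[OF ry2 d1], of "b 0 4"]
    unfolding Eb by (simp add: algebra_simps)
  define Ka where "Ka = \<bar>a 1 2\<bar> + \<bar>a 0 3\<bar> + \<bar>a 3 1\<bar> + \<bar>a 2 2\<bar> + \<bar>a 1 3\<bar> + \<bar>a 0 4\<bar>"
  define Kb where "Kb = \<bar>b 0 2\<bar> + \<bar>b 2 1\<bar> + \<bar>b 4 0\<bar> + \<bar>b 1 2\<bar> + \<bar>b 0 3\<bar> + \<bar>b 3 1\<bar> + \<bar>b 2 2\<bar> + \<bar>b 1 3\<bar> + \<bar>b 0 4\<bar>"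
  have Ra': "E a x y \<ge> c0 * S - \<delta> * Ka * S" using Ra unfolding Ka_def .
  have Rb': "\<epsilon> * E b x y \<ge> - (\<epsilon> * Kb * S)"
    using mult_left_mono[OF Rb e0] unfolding Kb_def by (simp add: algebra_simps)
  have "\<delta> * Ka * S \<le> c0 / 2 * S" using dK S0 unfolding Ka_def by (intro mult_right_mono) auto
  moreover have "\<epsilon> * Kb * S \<le> c0 / 2 * S" using eK S0 unfolding Kb_def by (intro mult_right_mono) auto
  ultimately show ?thesis using Ra' Rb' by (simp add: algebra_simps)
qed

theorem mainTheorem3:
  fixes T :: "real^3 \<Rightarrow> real^3" and p :: "real^3"
    and a b :: "nat \<Rightarrow> nat \<Rightarrow> real"
  assumes "linear T" and "bij T"
    and "T p = vector [0, 0, 1]"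
    and "in_F T a" and "in_I b"
    and "local_ord a = 2"
    and "poly (pderiv (pderiv (discr a))) 0 \<noteq> 0"
  shows "\<exists>U \<epsilon>. open U \<and> p \<in> U \<and> \<epsilon> > 0 \<and>
           (\<forall>v\<in>U. form_of T a v + \<epsilon> * form_of T b v \<ge> 0)"
proof -
  have N: "E a x y \<ge> 0" for x y
  proof -
    have "T (inv T (vector [x, y, 1])) = vector [x, y, 1]"
      using assms(2) by (simp add: bij_is_surj surj_f_inv_f)
    hence "E a x y = form_of T a (inv T (vector [x, y, 1]))"
      by (simp add: form_of_def quartic_aff)
    thus ?thesis using assms(4) unfolding in_F_def by simp
  qed
  have a00: "a 0 0 = 0" and a20: "a 2 0 = 0" using assms(4) unfolding in_F_def by auto
  have a10: "a 1 0 = 0" and a01: "a 0 1 = 0" using ord_low[OF assms(6)] by auto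
  have zb: "b 0 0 = 0" "b 1 0 = 0" "b 0 1 = 0" "b 2 0 = 0" "b 1 1 = 0" "b 3 0 = 0"
    using assms(5) unfolding in_I_def by auto
  have a30: "a 3 0 = 0"
  proof (rule lin_zero)
    fix x :: real assume x: "x \<noteq> 0"
    have "E a x 0 = x^2 * (x * (a 3 0 + a 4 0 * x))"
      unfolding E_def using a00 a10 a01 a20 by (simp add: algebra_simps eval_nat_numeral)
    hence "x^2 * (x * (a 3 0 + a 4 0 * x)) \<ge> 0" using N by metis
    moreover have "x^2 > 0" using x by simp
    ultimately show "x * (a 3 0 + a 4 0 * x) \<ge> 0" by (simp add: zero_le_mult_iff)
  qed
  have lin1: "t * (a 1 1 + a 0 2 * t) \<ge> 0" for t
  proof -
    define \<phi> where "\<phi> = (\<lambda>x. t * (a 1 1 + a 0 2 * t) + x * (a 3 0 + a 2 1 * t + a 1 2 * t^2 + a 0 3 * t^3)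
       + x^2 * (a 4 0 + a 3 1 * t + a 2 2 * t^2 + a 1 3 * t^3 + a 0 4 * t^4))"
    have "\<phi> 0 \<ge> 0"
    proof (rule cont_nonneg)
      show "isCont \<phi> 0" unfolding \<phi>_def by (intro continuous_intros)
      fix x :: real assume x: "x \<noteq> 0"
      have "E a x (t * x) = x^2 * \<phi> x"
        unfolding E_def \<phi>_def using a00 a10 a01 a20 by (simp add: algebra_simps eval_nat_numeral)
      hence "x^2 * \<phi> x \<ge> 0" using N by metis
      moreover have "x^2 > 0" using x by simp
      ultimately show "\<phi> x \<ge> 0" by (simp add: zero_le_mult_iff)
    qed
    thus ?thesis unfolding \<phi>_def by simp
  qed
  have a11: "a 1 1 = 0" by (rule lin_zero) (use lin1 in auto)
  have A0: "a 0 2 \<ge> 0" using lin1[of 1] a11 by simp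
  have quad: "a 0 2 * t^2 + a 2 1 * t + a 4 0 \<ge> 0" for t
  proof -
    define \<psi> where "\<psi> = (\<lambda>x. a 0 2 * t^2 + a 2 1 * t + a 4 0 + x * (a 1 2 * t^2 + a 3 1 * t)
       + x^2 * (a 0 3 * t^3 + a 2 2 * t^2) + x^3 * (a 1 3 * t^3) + x^4 * (a 0 4 * t^4))"
    have "\<psi> 0 \<ge> 0"
    proof (rule cont_nonneg)
      show "isCont \<psi> 0" unfolding \<psi>_def by (intro continuous_intros)
      fix x :: real assume x: "x \<noteq> 0"
      have "E a x (t * x^2) = x^4 * \<psi> x"
        unfolding E_def \<psi>_def using a00 a10 a01 a20 a11 a30
        by (simp add: algebra_simps eval_nat_numeral)
      hence "x^4 * \<psi> x \<ge> 0" using N by metis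
      moreover have "x^4 > 0" using x by simp
      ultimately show "\<psi> x \<ge> 0" by (simp add: zero_le_mult_iff)
    qed
    thus ?thesis unfolding \<psi>_def by simp
  qed
  have disc_le: "(a 2 1)^2 \<le> 4 * a 0 2 * a 4 0"
  proof (cases "a 0 2 = 0")
    case True
    have "a 2 1 = 0"
    proof (rule lin_zero[of "a 2 1" 0])
      fix t :: real assume "t \<noteq> 0"
      show "t * (a 2 1 + 0 * t) \<ge> 0"
      proof (rule ccontr)
        assume h: "\<not> ?thesis"
        hence "a 2 1 * t < 0" by (simp add: algebra_simps)
        define k where "k = (\<bar>a 4 0\<bar> + 1) / (- (a 2 1 * t))"
        have k: "k > 0" unfolding k_def using \<open>a 2 1 * t < 0\<close>
          by (intro divide_pos_pos) auto
        have nz: "a 2 1 * t \<noteq> 0" using \<open>a 2 1 * t < 0\<close> by linarith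
        have "a 2 1 * (k * t) = k * (a 2 1 * t)" by simp
        also have "\<dots> = - (\<bar>a 4 0\<bar> + 1)"
          unfolding k_def using nz by (simp add: divide_simps)
        finally have "a 2 1 * (k * t) = - (\<bar>a 4 0\<bar> + 1)" .
        thus False using quad[of "k * t"] True by simp
      qed
    qed
    thus ?thesis using True by simp
  next
    case False
    hence A: "a 0 2 > 0" using A0 by simp
    have "a 0 2 * (- a 2 1 / (2 * a 0 2))^2 + a 2 1 * (- a 2 1 / (2 * a 0 2)) + a 4 0
        = a 4 0 - (a 2 1)^2 / (4 * a 0 2)"
      using A by (simp add: field_simps power2_eq_square)
    hence "a 4 0 - (a 2 1)^2 / (4 * a 0 2) \<ge> 0" using quad by metis
    thus ?thesis using A by (simp add: field_simps)
  qed
  have "(a 2 1)^2 - 4 * a 0 2 * a 4 0 \<noteq> 0"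
    using assms(7) unfolding discr_dd0 using a20 a11 a30 by simp
  hence dpos: "4 * a 0 2 * a 4 0 - (a 2 1)^2 > 0" using disc_le by simp
  have Apos: "a 0 2 > 0"
  proof (rule ccontr)
    assume "\<not> a 0 2 > 0" hence "a 0 2 = 0" using A0 by simp
    thus False using dpos by simp
  qed
  have Cpos: "a 4 0 > 0"
  proof (rule ccontr)
    assume "\<not> a 4 0 > 0"
    hence "4 * a 0 2 * a 4 0 \<le> 0" using Apos by (simp add: mult_nonneg_nonpos)
    thus False using dpos by (smt (verit) zero_le_power2)
  qed
  define c0 where "c0 = (4 * a 0 2 * a 4 0 - (a 2 1)^2) / (4 * (a 0 2 + a 4 0))"
  have c0pos: "c0 > 0" unfolding c0_def using dpos Apos Cpos by simp
  have c0eq: "c0 * (4 * (a 0 2 + a 4 0)) = 4 * a 0 2 * a 4 0 - (a 2 1)^2"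
    unfolding c0_def using Apos Cpos by simp
  have c0A: "c0 < a 0 2"
  proof -
    have "c0 * (4 * (a 0 2 + a 4 0)) \<le> 4 * a 0 2 * a 4 0" using c0eq by simp
    also have "\<dots> < a 0 2 * (4 * (a 0 2 + a 4 0))" using Apos by (simp add: algebra_simps)
    finally show ?thesis using Apos Cpos by (simp add: mult_less_cancel_right)
  qed
  have qf: "a 0 2 * Y^2 + a 2 1 * Y * W + a 4 0 * W^2 \<ge> c0 * (Y^2 + W^2)" for Y W
  proof -
    have "4 * (a 0 2 - c0) * (a 4 0 - c0) = (a 2 1)^2 + 4 * c0^2"
      using c0eq by (simp add: algebra_simps power2_eq_square)
    hence "4 * (a 0 2 - c0) * (a 4 0 - c0) \<ge> (a 2 1)^2" by simp
    from qf_nonneg[where P="a 0 2 - c0" and Q="a 4 0 - c0" and B="a 2 1" and Y=Y and W=W, OF _ this] c0A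
    show ?thesis by (simp add: algebra_simps)
  qed
  define Ka where "Ka = \<bar>a 1 2\<bar> + \<bar>a 0 3\<bar> + \<bar>a 3 1\<bar> + \<bar>a 2 2\<bar> + \<bar>a 1 3\<bar> + \<bar>a 0 4\<bar>"
  define Kb where "Kb = \<bar>b 0 2\<bar> + \<bar>b 2 1\<bar> + \<bar>b 4 0\<bar> + \<bar>b 1 2\<bar> + \<bar>b 0 3\<bar> + \<bar>b 3 1\<bar> + \<bar>b 2 2\<bar> + \<bar>b 1 3\<bar> + \<bar>b 0 4\<bar>"
  have Ka0: "Ka \<ge> 0" and Kb0: "Kb \<ge> 0" unfolding Ka_def Kb_def by simp_all
  define \<delta> where "\<delta> = min 1 (c0 / (2 * (Ka + 1)))"
  define \<epsilon> where "\<epsilon> = min 1 (c0 / (2 * (Kb + 1)))"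
  have d0: "\<delta> > 0" and d1: "\<delta> \<le> 1" unfolding \<delta>_def using c0pos Ka0 by auto
  have e0: "\<epsilon> > 0" unfolding \<epsilon>_def using c0pos Kb0 by auto
  have dK: "\<delta> * Ka \<le> c0 / 2"
  proof -
    have "\<delta> * Ka \<le> \<delta> * (Ka + 1)" using d0 by simp
    also have "\<dots> \<le> c0 / (2 * (Ka + 1)) * (Ka + 1)"
      using Ka0 by (intro mult_right_mono) (auto simp: \<delta>_def)
    also have "\<dots> = c0 / 2" using Ka0 by (simp add: field_simps)
    finally show ?thesis .
  qed
  have eK: "\<epsilon> * Kb \<le> c0 / 2"
  proof -
    have "\<epsilon> * Kb \<le> \<epsilon> * (Kb + 1)" using e0 by simp
    also have "\<dots> \<le> c0 / (2 * (Kb + 1)) * (Kb + 1)"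
      using Kb0 by (intro mult_right_mono) (auto simp: \<epsilon>_def)
    also have "\<dots> = c0 / 2" using Kb0 by (simp add: field_simps)
    finally show ?thesis .
  qed
  define U where "U = {v. 0 < (T v)$3 \<and> (T v)$1 < \<delta> * (T v)$3 \<and> - (T v)$1 < \<delta> * (T v)$3
                         \<and> (T v)$2 < \<delta> * (T v)$3 \<and> - (T v)$2 < \<delta> * (T v)$3}"
  have cT: "continuous_on UNIV T"
    using assms(1) by (intro linear_continuous_on) (simp add: linear_conv_bounded_linear)
  have "open U" unfolding U_def
    by (intro open_Collect_conj open_Collect_less continuous_intros cT)
  moreover have "p \<in> U" unfolding U_def using assms(3) d0 by simp
  moreover have "\<forall>v\<in>U. form_of T a v + \<epsilon> * form_of T b v \<ge> 0"
  proof
    fix v assume "v \<in> U"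
    define u where "u = T v"
    have z: "u$3 > 0" and h1: "u$1 < \<delta> * u$3" "- u$1 < \<delta> * u$3"
      and h2: "u$2 < \<delta> * u$3" "- u$2 < \<delta> * u$3"
      using \<open>v \<in> U\<close> unfolding U_def u_def by auto
    have x: "\<bar>u$1 / u$3\<bar> \<le> \<delta>" using z h1 by (simp add: abs_le_iff field_simps)
    have y: "\<bar>u$2 / u$3\<bar> \<le> \<delta>" using z h2 by (simp add: abs_le_iff field_simps)
    have "E a (u$1 / u$3) (u$2 / u$3) + \<epsilon> * E b (u$1 / u$3) (u$2 / u$3) \<ge> 0"
      by (rule core[OF a00 a10 a01 a20 a11 a30 zb qf x y d1 less_imp_le[OF e0]])
         (use dK eK in \<open>simp_all add: Ka_def Kb_def\<close>)
    hence "(u$3)^4 * (E a (u$1 / u$3) (u$2 / u$3) + \<epsilon> * E b (u$1 / u$3) (u$2 / u$3)) \<ge> 0"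
      using z by simp
    thus "form_of T a v + \<epsilon> * form_of T b v \<ge> 0"
      unfolding form_of_def u_def[symmetric] using quartic_homog[of u a] quartic_homog[of u b] z
      by (simp add: algebra_simps)
  qed
  ultimately show ?thesis using e0 by blast
qed

end
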